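(* Let $n$ be an even positive integer, $\ell\ge 2$, and let $G$ be an $N$-AW graph on $n$ vertices with $|E(\overline{G})|=\frac{n}{2}+t$, where $t\ge 1$. Then the maximum degree of $\overline{G}$ is at most $t+1$.
   Context: All graphs are finite and simple; $\overline{G}$ is the complement. Labels lie in $\mathbb{Z}_\ell$. In the neighborhood Lights Out game, toggling a vertex $w$ adds $1$ (mod $\ell$) to the label of each vertex of the closed neighborhood $N[w]$; the game is won when all labels are $0$; a graph is $N$-AW if every initial labeling can be won. *)

theory Defs
  imports Main
begin

definition simple_graph :: "'a set \<Rightarrow> ('a \<Rightarrow> 'a \<Rightarrow> bool) \<Rightarrow> bool" where
  "simple_graph V E \<longleftrightarrow> finite V \<and> (\<forall>u v. E u v \<longrightarrow> u \<in> V \<and> v \<in> V)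
     \<and> (\<forall>u v. E u v \<longrightarrow> E v u) \<and> (\<forall>v. \<not> E v v)"

definition closed_nbhd :: "'a set \<Rightarrow> ('a \<Rightarrow> 'a \<Rightarrow> bool) \<Rightarrow> 'a \<Rightarrow> 'a set" where
  "closed_nbhd V E w = {v \<in> V. v = w \<or> E w v}"

text \<open>N-AW over Z_l: every labeling V -> {0..<l} can be brought to all zeros by toggling;
  x w is the number of times vertex w is toggled.  Vertex v receives +1 from each toggle of
  a vertex w with v in N[w], equivalently w in N[v].\<close>
definition N_AW :: "nat \<Rightarrow> 'a set \<Rightarrow> ('a \<Rightarrow> 'a \<Rightarrow> bool) \<Rightarrow> bool" where
  "N_AW l V E \<longleftrightarrow> (\<forall>f :: 'a \<Rightarrow> int. (\<forall>v\<in>V. 0 \<le> f v \<and> f v < int l) \<longrightarrow>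
     (\<exists>x :: 'a \<Rightarrow> nat. \<forall>v\<in>V. (f v + (\<Sum>w\<in>closed_nbhd V E v. int (x w))) mod int l = 0))"

definition compl_edges :: "'a set \<Rightarrow> ('a \<Rightarrow> 'a \<Rightarrow> bool) \<Rightarrow> 'a set set" where
  "compl_edges V E = {{u, v} | u v. u \<in> V \<and> v \<in> V \<and> u \<noteq> v \<and> \<not> E u v}"

definition compl_degree :: "'a set \<Rightarrow> ('a \<Rightarrow> 'a \<Rightarrow> bool) \<Rightarrow> 'a \<Rightarrow> nat" where
  "compl_degree V E v = card {u \<in> V. u \<noteq> v \<and> \<not> E v u}"

end

theory Submission
  imports Defs
begin

lemma twins_not_AW:
  assumes "N_AW l V E" "l \<ge> 2" "a \<in> V" "b \<in> V" "a \<noteq> b"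
    "closed_nbhd V E a = closed_nbhd V E b"
  shows False
proof -
  define f :: "'a \<Rightarrow> int" where "f = (\<lambda>v. if v = a then 1 else 0)"
  have "\<forall>v\<in>V. 0 \<le> f v \<and> f v < int l" using assms(2) by (auto simp: f_def)
  then obtain x :: "'a \<Rightarrow> nat" where x: "\<forall>v\<in>V. (f v + (\<Sum>w\<in>closed_nbhd V E v. int (x w))) mod int l = 0"
    using assms(1) unfolding N_AW_def by blast
  define S where "S = (\<Sum>w\<in>closed_nbhd V E a. int (x w))"
  have 1: "(1 + S) mod int l = 0" using x assms(3) by (auto simp: f_def S_def)
  have 2: "S mod int l = 0" using x assms(4,5,6) by (auto simp: f_def S_def)
  have "(1 + S) mod int l = (1 mod int l + S mod int l) mod int l" by (simp add: mod_add_eq)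
  also have "\<dots> = 1" using 2 assms(2) by simp
  finally show False using 1 by simp
qed

lemma handshake:
  assumes "simple_graph V E"
  shows "(\<Sum>u\<in>V. compl_degree V E u) = 2 * card (compl_edges V E)"
proof -
  have fin: "finite V" using assms by (simp add: simple_graph_def)
  have sym: "\<And>u w. E u w = E w u" using assms unfolding simple_graph_def by blast
  define D where "D = Sigma V (\<lambda>u. {w\<in>V. w \<noteq> u \<and> \<not> E u w})"
  have finD: "finite D" using fin unfolding D_def by auto
  have c1: "card D = (\<Sum>u\<in>V. compl_degree V E u)"
    unfolding D_def compl_degree_def using fin by (subst card_SigmaI) (auto simp: eq_commute)
  define g where "g = (\<lambda>p::'a\<times>'a. {fst p, snd p})"
  have img: "g ` D = compl_edges V E"
  proof
    show "g ` D \<subseteq> compl_edges V E"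
    proof
      fix e assume "e \<in> g ` D"
      then obtain a b where "(a,b) \<in> D" "e = {a,b}" unfolding g_def by auto
      then show "e \<in> compl_edges V E" unfolding D_def compl_edges_def by blast
    qed
  next
    show "compl_edges V E \<subseteq> g ` D"
    proof
      fix e assume "e \<in> compl_edges V E"
      then obtain a b where ab: "e = {a,b}" "a \<in> V" "b \<in> V" "a \<noteq> b" "\<not> E a b"
        unfolding compl_edges_def by blast
      then have "(a,b) \<in> D" unfolding D_def by auto
      moreover have "e = g (a,b)" using ab g_def by simp
      ultimately show "e \<in> g ` D" by blast
    qed
  qed
  have fib: "card {p. p \<in> D \<and> g p = e} = 2" if eC: "e \<in> compl_edges V E" for e
  proof -
    obtain a b where ab: "e = {a,b}" "a \<in> V" "b \<in> V" "a \<noteq> b" "\<not> E a b"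
      using eC unfolding compl_edges_def by blast
    have "{p. p \<in> D \<and> g p = e} = {(a,b),(b,a)}"
      using ab sym unfolding D_def g_def by (auto simp: doubleton_eq_iff)
    then show ?thesis using ab by simp
  qed
  have "card D = (\<Sum>e\<in>g ` D. card {p. p \<in> D \<and> g p = e})"
    using sum.image_gen[OF finD, of "\<lambda>_. 1::nat" g] by simp
  also have "\<dots> = (\<Sum>e\<in>compl_edges V E. 2)" using img fib by simp
  finally show ?thesis using c1 by simp
qed

theorem lemma4p11:
  fixes V :: "'a set" and E :: "'a \<Rightarrow> 'a \<Rightarrow> bool" and n l t :: nat
  assumes "simple_graph V E"
    and "card V = n" and "even n" and "n > 0"
    and "l \<ge> 2"
    and "N_AW l V E"
    and "card (compl_edges V E) = n div 2 + t" and "t \<ge> 1"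
  shows "\<forall>v\<in>V. compl_degree V E v \<le> t + 1"
proof
  fix v assume vV: "v \<in> V"
  have fin: "finite V" using assms(1) by (simp add: simple_graph_def)
  have sym: "\<And>u w. E u w = E w u" using assms(1) unfolding simple_graph_def by blast
  have irr: "\<And>u. \<not> E u u" using assms(1) unfolding simple_graph_def by blast
  have inV: "\<And>u w. E u w \<Longrightarrow> u \<in> V \<and> w \<in> V" using assms(1) unfolding simple_graph_def by blast
  let ?cd = "compl_degree V E"
  define W where "W = V - {v}"
  have finW: "finite W" using fin W_def by simp
  define I where "I = {u\<in>W. ?cd u = 0}"
  define L where "L = {u\<in>W. ?cd u = 1 \<and> \<not> E v u}"
  have cd0: "closed_nbhd V E u = V" if "u \<in> V" "?cd u = 0" for u
  proof -
    have "{w \<in> V. w \<noteq> u \<and> \<not> E u w} = {}"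
      using that fin unfolding compl_degree_def by simp
    then show ?thesis unfolding closed_nbhd_def by blast
  qed
  have cd1: "closed_nbhd V E u = V - {v}" if "u \<in> W" "?cd u = 1" "\<not> E v u" for u
  proof -
    have "card {w \<in> V. w \<noteq> u \<and> \<not> E u w} = 1"
      using that unfolding compl_degree_def by simp
    then obtain z where z: "{w \<in> V. w \<noteq> u \<and> \<not> E u w} = {z}" using card_1_singletonE by blast
    have "v \<in> {w \<in> V. w \<noteq> u \<and> \<not> E u w}" using that vV sym unfolding W_def by auto
    then have "{w \<in> V. w \<noteq> u \<and> \<not> E u w} = {v}" using z by auto
    then show ?thesis using that irr unfolding closed_nbhd_def W_def by blast
  qed
  have cI: "card I \<le> 1"
  proof -
    have "\<forall>a\<in>I. \<forall>b\<in>I. a = b"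
    proof (intro ballI, rule ccontr)
      fix a b assume "a \<in> I" "b \<in> I" "a \<noteq> b"
      then show False using twins_not_AW[OF assms(6) assms(5), of a b] cd0 unfolding I_def W_def by auto
    qed
    then show ?thesis using card_le_Suc0_iff_eq[of I] finW I_def by simp
  qed
  have cL: "card L \<le> 1"
  proof -
    have "\<forall>a\<in>L. \<forall>b\<in>L. a = b"
    proof (intro ballI, rule ccontr)
      fix a b assume "a \<in> L" "b \<in> L" "a \<noteq> b"
      then show False using twins_not_AW[OF assms(6) assms(5), of a b] cd1 unfolding L_def W_def by auto
    qed
    then show ?thesis using card_le_Suc0_iff_eq[of L] finW L_def by simp
  qed
  have pt: "?cd u + of_bool (u \<in> I) + of_bool (u \<in> L) \<ge> 1 + of_bool (\<not> E v u)" if "u \<in> W" for u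
  proof (cases "?cd u = 0")
    case True
    then have "closed_nbhd V E u = V" using cd0 that W_def by auto
    then have "E u v" using vV that unfolding W_def closed_nbhd_def by auto
    then show ?thesis using sym that True I_def by auto
  next
    case False
    then show ?thesis using that L_def by (cases "?cd u = 1") auto
  qed
  have "(\<Sum>u\<in>W. 1 + of_bool (\<not> E v u)) \<le> (\<Sum>u\<in>W. ?cd u + of_bool (u \<in> I) + of_bool (u \<in> L))"
    using pt by (intro sum_mono) auto
  also have "\<dots> = (\<Sum>u\<in>W. ?cd u) + card I + card L"
    using finW by (simp add: sum.distrib I_def L_def Int_def)
  finally have s1: "card W + card (W \<inter> {u. \<not> E v u}) \<le> (\<Sum>u\<in>W. ?cd u) + card I + card L"
    using finW by (simp add: sum.distrib sum_Suc)
  have dv: "card (W \<inter> {u. \<not> E v u}) = ?cd v"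
    unfolding compl_degree_def W_def by (rule arg_cong[where f=card]) auto
  have cW: "card W = n - 1" using W_def assms(2) vV fin by simp
  have tot: "(\<Sum>u\<in>V. ?cd u) = ?cd v + (\<Sum>u\<in>W. ?cd u)"
    unfolding W_def using fin vV by (simp add: sum.remove)
  have "(\<Sum>u\<in>V. ?cd u) = n + 2 * t" using handshake[OF assms(1)] assms(7) assms(3) by simp
  then show "?cd v \<le> t + 1" using tot s1 dv cW cI cL assms(4) by linarith
qed

end
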